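(* Let $1\le d'<d$ and let $K\subset\mathcal{D}_0$ be a $d'$-POU set about $x_0$ that is contained in the affine subspace $\{y\in\mathbb{R}^d:y_{d'+1}=x_{d'+1},\dots,y_d=x_d\}$ for some $x_i\ge x_{i0}$ ($i>d'$), with $0<\lambda_{d'}(K_{x_{d'+1},\dots,x_d})<\infty$, where $K_{x_{d'+1},\dots,x_d}=\{(y_1,\dots,y_{d'}):(y_1,\dots,y_{d'},x_{d'+1},\dots,x_d)\in K\}$. Then $W_K$ is an extreme point of the class of $d'$-POU distributions about $x_0$ on $\mathcal{D}_0$.
   Context: $x_0\in\mathbb{R}^{d'}\times[-\infty,\infty)^{d-d'}$, $\mathcal{D}_0=\{x\ge x_0\}$ (componentwise). A measurable $K\subset\mathcal{D}_0$ is $d'$-POU about $x_0$ if $x\in K$, $x_i\ge x'_i\ge x_{i0}$ ($i\le d'$), $x'_i=x_i$ ($i>d'$) imply $x'\in K$; a distribution on $\mathcal{D}_0$ is $d'$-POU about $x_0$ if it lies in the closed (weak topology) convex hull of uniform distributions on $d'$-POU subsets of $\mathcal{D}_0$. $W_K$ is the uniform distribution on $K$ with respect to $d'$-dimensional Lebesgue measure on the subspace containing $K$. *)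

theory Defs
  imports "HOL-Probability.Probability"
begin

text \<open>Points of R^d are pairs (y,z) with y in R^d' (first d' coordinates, index type 'n,
  d' = CARD('n)) and z in R^(d-d') (last d-d' coordinates, index type 'm).
  The base point x0 = (a,b) has a in R^d' and b in [-inf,inf)^(d-d').\<close>

definition D0 :: "real^'n \<Rightarrow> ('m \<Rightarrow> ereal) \<Rightarrow> ((real^'n) \<times> (real^'m)) set" where
  "D0 a b = {(y,z). (\<forall>i. a$i \<le> y$i) \<and> (\<forall>j. b j \<le> ereal (z$j))}"

definition POU_set :: "real^'n \<Rightarrow> ('m \<Rightarrow> ereal) \<Rightarrow> ((real^'n) \<times> (real^'m)) set \<Rightarrow> bool" where
  "POU_set a b K \<longleftrightarrow> K \<in> sets borel \<and> K \<subseteq> D0 a b \<and>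
     (\<forall>y z y'. (y,z) \<in> K \<longrightarrow> (\<forall>i. y$i \<ge> y'$i \<and> y'$i \<ge> a$i) \<longrightarrow> (y',z) \<in> K)"

definition slice :: "((real^'n) \<times> (real^'m)) set \<Rightarrow> real^'m \<Rightarrow> (real^'n) set" where
  "slice K c = {y. (y,c) \<in> K}"

text \<open>Uniform distribution W_K on a set K contained in the affine subspace {z = c},
  w.r.t. d'-dimensional Lebesgue measure on that subspace.\<close>
definition W :: "((real^'n) \<times> (real^'m)) set \<Rightarrow> real^'m \<Rightarrow> ((real^'n) \<times> (real^'m)) measure" where
  "W K c = distr (uniform_measure lborel (slice K c)) borel (\<lambda>y. (y,c))"

definition POU_uniforms :: "real^'n \<Rightarrow> ('m \<Rightarrow> ereal) \<Rightarrow> ((real^'n) \<times> (real^'m)) measure set" where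
  "POU_uniforms a b = {W K c | K c. POU_set a b K \<and> K \<subseteq> {(y,z). z = c} \<and>
      0 < emeasure lborel (slice K c) \<and> emeasure lborel (slice K c) < \<infinity>}"

definition distributions_on :: "((real^'n) \<times> (real^'m)) set \<Rightarrow> ((real^'n) \<times> (real^'m)) measure set" where
  "distributions_on D = {\<mu>. prob_space \<mu> \<and> sets \<mu> = sets borel \<and> emeasure \<mu> D = 1}"

definition measure_convex_hull :: "'a measure set \<Rightarrow> 'a measure \<Rightarrow> bool" where
  "measure_convex_hull S \<mu> \<longleftrightarrow> (\<exists>n::nat. \<exists>c \<nu>.
      (\<forall>i<n. \<nu> i \<in> S \<and> c i \<ge> (0::real)) \<and> (\<Sum>i<n. c i) = 1 \<and>
      (\<forall>A \<in> sets \<mu>. measure \<mu> A = (\<Sum>i<n. c i * measure (\<nu> i) A)))"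

text \<open>Closure within the distributions on D0 w.r.t. the weak topology, i.e. the initial topology
  of the maps mu |-> integral of f for bounded continuous f (basic neighbourhoods).\<close>
definition weak_closure :: "('a::topological_space) measure set \<Rightarrow> 'a measure set \<Rightarrow> 'a measure set" where
  "weak_closure P S = {\<mu> \<in> P. \<forall>F e. finite F \<and> e > 0 \<and>
       (\<forall>f\<in>F. continuous_on UNIV f \<and> bounded (range (f::'a \<Rightarrow> real))) \<longrightarrow>
       (\<exists>\<nu>\<in>S. \<forall>f\<in>F. \<bar>(\<integral>x. f x \<partial>\<mu>) - (\<integral>x. f x \<partial>\<nu>)\<bar> < e)}"

definition POU_distributions :: "real^'n \<Rightarrow> ('m \<Rightarrow> ereal) \<Rightarrow> ((real^'n) \<times> (real^'m)) measure set" where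
  "POU_distributions a b = weak_closure (distributions_on (D0 a b))
      {\<mu> \<in> distributions_on (D0 a b). measure_convex_hull (POU_uniforms a b) \<mu>}"

definition extreme_point_measures :: "'a measure set \<Rightarrow> 'a measure \<Rightarrow> bool" where
  "extreme_point_measures C \<mu> \<longleftrightarrow> \<mu> \<in> C \<and>
     (\<forall>\<mu>1 \<in> C. \<forall>\<mu>2 \<in> C. \<forall>t::real. 0 < t \<and> t < 1 \<and>
        (\<forall>A \<in> sets \<mu>. measure \<mu> A = t * measure \<mu>1 A + (1 - t) * measure \<mu>2 A)
        \<longrightarrow> \<mu>1 = \<mu> \<and> \<mu>2 = \<mu>)"

end

theory Submission
  imports Defs
begin


lemma hull_nn_integral:
  fixes \<mu> :: "'a measure" and \<nu> :: "nat \<Rightarrow> 'a measure"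
  assumes fin: "\<And>i. i<n \<Longrightarrow> finite_measure (\<nu> i)" and sets: "\<And>i. i<n \<Longrightarrow> sets (\<nu> i) = sets \<mu>"
    and finmu: "finite_measure \<mu>"
    and cpos: "\<And>i. i<n \<Longrightarrow> c i \<ge> 0"
    and eq: "\<And>A. A\<in>sets \<mu> \<Longrightarrow> measure \<mu> A = (\<Sum>i<n. c i * measure (\<nu> i) A)"
    and f: "f \<in> borel_measurable \<mu>"
  shows "(\<integral>\<^sup>+x. f x \<partial>\<mu>) = (\<Sum>i<n. ennreal (c i) * (\<integral>\<^sup>+x. f x \<partial>\<nu> i))"
  using f
proof -
  have tr: "u \<in> borel_measurable (\<nu> i)" if "i<n" "u \<in> borel_measurable \<mu>" for i and u :: "'a \<Rightarrow> ennreal"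
    by (subst measurable_cong_sets[OF sets[OF that(1)] refl]) (rule that(2))
  show ?thesis using f
proof (induction rule: borel_measurable_induct)
  case (cong f g)
  have "\<And>i. i<n \<Longrightarrow> (\<integral>\<^sup>+x. f x \<partial>\<nu> i) = (\<integral>\<^sup>+x. g x \<partial>\<nu> i)"
  proof -
    fix i assume "i<n"
    then have "space (\<nu> i) = space \<mu>" using sets sets_eq_imp_space_eq by blast
    then show "(\<integral>\<^sup>+x. f x \<partial>\<nu> i) = (\<integral>\<^sup>+x. g x \<partial>\<nu> i)"
      using cong(3) by (intro nn_integral_cong) simp
  qed
  moreover have "(\<integral>\<^sup>+x. f x \<partial>\<mu>) = (\<integral>\<^sup>+x. g x \<partial>\<mu>)"
    using cong(3) by (intro nn_integral_cong) auto
  ultimately show ?case using cong(4) by simp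
next
  case (set A)
  have "(\<integral>\<^sup>+x. indicator A x \<partial>\<mu>) = emeasure \<mu> A" using set by simp
  also have "\<dots> = ennreal (measure \<mu> A)" using finmu finite_measure.emeasure_eq_measure by blast
  also have "\<dots> = ennreal (\<Sum>i<n. c i * measure (\<nu> i) A)" using eq set by simp
  also have "\<dots> = (\<Sum>i<n. ennreal (c i * measure (\<nu> i) A))"
    by (rule sum_ennreal[symmetric]) (use cpos fin in auto)
  also have "\<dots> = (\<Sum>i<n. ennreal (c i) * (\<integral>\<^sup>+x. indicator A x \<partial>\<nu> i))"
  proof (rule sum.cong)
    fix i assume i: "i \<in> {..<n}"
    have "A \<in> sets (\<nu> i)" using sets i set by auto
    then show "ennreal (c i * measure (\<nu> i) A) = ennreal (c i) * (\<integral>\<^sup>+x. indicator A x \<partial>\<nu> i)"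
      using fin[of i] i cpos[of i] by (simp add: ennreal_mult finite_measure.emeasure_eq_measure)
  qed simp
  finally show ?case .
next
  case (mult u c')
  have mu: "\<And>i. i<n \<Longrightarrow> u \<in> borel_measurable (\<nu> i)"
    using mult(2) by (rule tr[rotated])
  have "(\<integral>\<^sup>+x. c' * u x \<partial>\<mu>) = c' * (\<integral>\<^sup>+x. u x \<partial>\<mu>)"
    using mult(2) by (rule nn_integral_cmult)
  also have "\<dots> = (\<Sum>i<n. ennreal (c i) * (\<integral>\<^sup>+x. c' * u x \<partial>\<nu> i))"
    unfolding mult(4) sum_distrib_left
  proof (rule sum.cong)
    fix i assume "i \<in> {..<n}"
    then have "(\<integral>\<^sup>+x. c' * u x \<partial>\<nu> i) = c' * (\<integral>\<^sup>+x. u x \<partial>\<nu> i)"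
      using mu by (intro nn_integral_cmult) auto
    then show "c' * (ennreal (c i) * integral\<^sup>N (\<nu> i) u) = ennreal (c i) * (\<integral>\<^sup>+x. c' * u x \<partial>\<nu> i)"
      by (simp add: mult.left_commute)
  qed simp
  finally show ?case .
next
  case (add u v)
  note hyps = add
  have um: "u \<in> borel_measurable \<mu>" and vm: "v \<in> borel_measurable \<mu>" using add by auto
  have mu: "\<And>i. i<n \<Longrightarrow> u \<in> borel_measurable (\<nu> i)" "\<And>i. i<n \<Longrightarrow> v \<in> borel_measurable (\<nu> i)"
    using tr um vm by blast+
  have "(\<integral>\<^sup>+x. v x + u x \<partial>\<mu>) = (\<integral>\<^sup>+x. v x \<partial>\<mu>) + (\<integral>\<^sup>+x. u x \<partial>\<mu>)"
    by (rule nn_integral_add[OF vm um])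
  also have "\<dots> = (\<Sum>i<n. ennreal (c i) * (\<integral>\<^sup>+x. v x + u x \<partial>\<nu> i))"
  proof -
    have Pu: "integral\<^sup>N \<mu> u = (\<Sum>i<n. ennreal (c i) * integral\<^sup>N (\<nu> i) u)"
     and Pv: "integral\<^sup>N \<mu> v = (\<Sum>i<n. ennreal (c i) * integral\<^sup>N (\<nu> i) v)" using add by blast+
    show ?thesis
    unfolding Pu Pv sum.distrib[symmetric]
    by (rule sum.cong) (simp_all add: nn_integral_add[OF mu(2) mu(1)] distrib_left)
  qed
  finally show ?case .
next
  case (seq U)
  have inc: "incseq U" using seq by blast
  have mu: "\<And>i j. i<n \<Longrightarrow> U j \<in> borel_measurable (\<nu> i)"
    using seq(1) by (rule tr[rotated])
  have "(\<integral>\<^sup>+x. (SUP j. U j) x \<partial>\<mu>) = (\<integral>\<^sup>+x. (SUP j. U j x) \<partial>\<mu>)" by (simp add: SUP_apply image_comp)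
  also have "\<dots> = (SUP j. \<integral>\<^sup>+x. U j x \<partial>\<mu>)"
    using seq by (intro nn_integral_monotone_convergence_SUP) auto
  also have "\<dots> = (SUP j. \<Sum>i<n. ennreal (c i) * (\<integral>\<^sup>+x. U j x \<partial>\<nu> i))"
  proof -
    have "\<And>j. integral\<^sup>N \<mu> (U j) = (\<Sum>i<n. ennreal (c i) * integral\<^sup>N (\<nu> i) (U j))"
      using seq by blast
    then show ?thesis by simp
  qed
  also have "\<dots> = (\<Sum>i<n. SUP j. ennreal (c i) * (\<integral>\<^sup>+x. U j x \<partial>\<nu> i))"
  proof (rule ennreal_SUP_sum)
    fix i assume "i \<in> {..<n}"
    show "incseq (\<lambda>j. ennreal (c i) * (\<integral>\<^sup>+x. U j x \<partial>\<nu> i))"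
      using inc unfolding incseq_def le_fun_def
      by (auto intro!: mult_left_mono nn_integral_mono)
  qed
  also have "\<dots> = (\<Sum>i<n. ennreal (c i) * (SUP j. (\<integral>\<^sup>+x. U j x \<partial>\<nu> i)))"
    by (simp add: SUP_mult_left_ennreal)
  also have "\<dots> = (\<Sum>i<n. ennreal (c i) * (\<integral>\<^sup>+x. (SUP j. U j) x \<partial>\<nu> i))"
  proof (rule sum.cong)
    fix i assume "i \<in> {..<n}"
    then have "(\<integral>\<^sup>+x. (SUP j. U j x) \<partial>\<nu> i) = (SUP j. integral\<^sup>N (\<nu> i) (U j))"
      using mu by (intro nn_integral_monotone_convergence_SUP[OF inc]) auto
    then show "ennreal (c i) * (SUP j. (\<integral>\<^sup>+x. U j x \<partial>\<nu> i)) = ennreal (c i) * (\<integral>\<^sup>+x. (SUP j. U j) x \<partial>\<nu> i)"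
      by (simp add: SUP_apply image_comp)
  qed simp
  finally show ?case .
qed
qed




definition vanish :: "real^'n \<Rightarrow> real^'n \<Rightarrow> (real^'n \<Rightarrow> real) \<Rightarrow> bool" where
  "vanish a v g \<longleftrightarrow> (\<forall>y. 0 \<le> g y) \<and> (\<forall>y. g y \<noteq> 0 \<longrightarrow> (\<forall>k. a$k + v$k \<le> y$k))"

lemma slice_borel:
  assumes "K \<in> sets borel" shows "slice K c \<in> sets borel"
proof -
  have "slice K c = (\<lambda>y. (y,c)) -` K" unfolding slice_def by auto
  moreover have "(\<lambda>y::real^'a. (y,c::real^'b)) \<in> borel_measurable borel" by measurable
  ultimately show ?thesis using assms measurable_sets_borel by metis
qed

lemma fst_borel[measurable]: "fst \<in> borel_measurable (borel :: ('a::topological_space \<times> 'b::topological_space) measure)"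
  by (rule borel_measurable_continuous_onI) (intro continuous_intros)

lemma pair_c_borel[measurable]: "(\<lambda>y. (y,c)) \<in> (borel :: 'a::topological_space measure) \<rightarrow>\<^sub>M (borel :: ('a \<times> 'b::topological_space) measure)"
  by (rule borel_measurable_continuous_onI) (intro continuous_intros)

lemma nn_integral_W:
  fixes K :: "((real^'n) \<times> (real^'m)) set"
  assumes "K \<in> sets borel" and h: "h \<in> borel_measurable borel"
  shows "(\<integral>\<^sup>+x. h x \<partial>W K c) = (\<integral>\<^sup>+y. h (y,c) * indicator (slice K c) y \<partial>lborel) / emeasure lborel (slice K c)"
proof -
  have S: "slice K c \<in> sets lborel" using slice_borel[OF assms(1)] by simp
  have m: "(\<lambda>y::real^'n. (y,c)) \<in> uniform_measure lborel (slice K c) \<rightarrow>\<^sub>M borel"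
    by (simp add: measurable_cong_sets[OF sets_uniform_measure refl]) 
  have "(\<integral>\<^sup>+x. h x \<partial>W K c) = (\<integral>\<^sup>+y. h (y,c) \<partial>uniform_measure lborel (slice K c))"
    unfolding W_def by (rule nn_integral_distr[OF m]) (simp add: h)
  also have "\<dots> = (\<integral>\<^sup>+y. h (y,c) * indicator (slice K c) y \<partial>lborel) / emeasure lborel (slice K c)"
    by (rule nn_integral_uniform_measure) (use h S in auto)
  finally show ?thesis .
qed

lemma uniform_TI:
  fixes K :: "((real^'n) \<times> (real^'m)) set"
  assumes pou: "POU_set a b K"
    and g: "g \<in> borel_measurable borel" and van: "vanish a v g" and v: "\<forall>k. 0 \<le> v$k"
  shows "(\<integral>\<^sup>+x. ennreal (g (fst x)) \<partial>W K c) \<le> (\<integral>\<^sup>+x. ennreal (g (fst x + v)) \<partial>W K c)"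
proof -
  let ?S = "slice K c"
  have Kb: "K \<in> sets borel" using pou unfolding POU_set_def by auto
  have Sb[measurable]: "?S \<in> sets borel" by (rule slice_borel[OF Kb])
  have g1: "(\<lambda>x. ennreal (g (fst x))) \<in> borel_measurable (borel :: ((real^'n) \<times> (real^'m)) measure)"
    using measurable_compose[OF fst_borel g] by measurable
  have g2: "(\<lambda>x. ennreal (g (fst x + v))) \<in> borel_measurable (borel :: ((real^'n) \<times> (real^'m)) measure)"
  proof -
    have "(\<lambda>x::(real^'n)\<times>(real^'m). fst x + v) \<in> borel \<rightarrow>\<^sub>M borel"
      by (rule borel_measurable_continuous_onI) (intro continuous_intros)
    from measurable_compose[OF this g] show ?thesis by measurable
  qed
  define G where "G u = ennreal (g u) * indicator ?S (u - v)" for u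
  have Gm: "G \<in> borel_measurable borel" unfolding G_def using g by measurable
  have le: "(\<integral>\<^sup>+y. ennreal (g y) * indicator ?S y \<partial>lborel) \<le> (\<integral>\<^sup>+y. G y \<partial>lborel)"
  proof (rule nn_integral_mono)
    fix u :: "real^'n"
    show "ennreal (g u) * indicator ?S u \<le> G u"
    proof (cases "g u = 0 \<or> u \<notin> ?S")
      case True then show ?thesis unfolding G_def by auto
    next
      case False
      then have gu: "g u \<noteq> 0" and uS: "(u,c) \<in> K" unfolding slice_def by auto
      have "(u - v, c) \<in> K"
        using pou uS van gu v unfolding POU_set_def vanish_def
        by (smt (verit, best) vector_minus_component)
      then show ?thesis using uS unfolding G_def slice_def by (simp add: indicator_def)
    qed
  qed
  also have "(\<integral>\<^sup>+y. G y \<partial>lborel) = (\<integral>\<^sup>+y. G y \<partial>distr lborel borel ((+) v))"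
    by (simp add: lborel_distr_plus)
  also have "\<dots> = (\<integral>\<^sup>+y. G (v + y) \<partial>lborel)"
    by (rule nn_integral_distr) (use Gm in auto)
  also have "\<dots> = (\<integral>\<^sup>+y. ennreal (g (y + v)) * indicator ?S y \<partial>lborel)"
    unfolding G_def by (simp add: add.commute)
  finally have le2: "(\<integral>\<^sup>+y. ennreal (g y) * indicator ?S y \<partial>lborel) \<le> (\<integral>\<^sup>+y. ennreal (g (y + v)) * indicator ?S y \<partial>lborel)" .
  show ?thesis
    unfolding nn_integral_W[OF Kb g1] nn_integral_W[OF Kb g2] fst_conv
    using le2 by (rule divide_right_mono_ennreal)
qed




lemma W_prob:
  fixes K :: "((real^'n) \<times> (real^'m)) set"
  assumes "0 < emeasure lborel (slice K c)" "emeasure lborel (slice K c) < \<infinity>"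
  shows "prob_space (W K c)"
  unfolding W_def
  by (rule prob_space.prob_space_distr) (use assms in \<open>auto intro!: prob_space_uniform_measure\<close>)

lemma sets_W[simp]: "sets (W K c) = sets borel"
  unfolding W_def by simp

lemma hull_TI:
  fixes \<nu> :: "((real^'n) \<times> (real^'m)) measure"
  assumes nu: "\<nu> \<in> distributions_on (D0 a b)" and hull: "measure_convex_hull (POU_uniforms a b) \<nu>"
    and g: "continuous_on UNIV g" "bounded (range g)" and van: "vanish a v g" and v: "\<forall>k. 0 \<le> v$k"
  shows "(\<integral>x. g (fst x) \<partial>\<nu>) \<le> (\<integral>x. g (fst x + v) \<partial>\<nu>)"
proof -
  from hull obtain n :: nat and c \<nu>' where hh: "(\<forall>i<n. \<nu>' i \<in> POU_uniforms a b \<and> c i \<ge> (0::real)) \<and> (\<Sum>i<n. c i) = 1 \<and>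
      (\<forall>A \<in> sets \<nu>. measure \<nu> A = (\<Sum>i<n. c i * measure (\<nu>' i) A))"
    unfolding measure_convex_hull_def by blast
  then have hyp: "\<forall>i<n. \<nu>' i \<in> POU_uniforms a b \<and> c i \<ge> (0::real)"
    and eqm: "\<forall>A \<in> sets \<nu>. measure \<nu> A = (\<Sum>i<n. c i * measure (\<nu>' i) A)" by auto
  have pnu: "prob_space \<nu>" and snu: "sets \<nu> = sets borel" using nu unfolding distributions_on_def by auto
  have gm: "g \<in> borel_measurable borel" using g(1) by (rule borel_measurable_continuous_onI)
  have fst_v: "(\<lambda>x::(real^'n)\<times>(real^'m). fst x + v) \<in> borel \<rightarrow>\<^sub>M borel"
    by (rule borel_measurable_continuous_onI) (intro continuous_intros)
  have f1: "(\<lambda>x. ennreal (g (fst x))) \<in> borel_measurable (borel :: ((real^'n) \<times> (real^'m)) measure)"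
    using measurable_compose[OF fst_borel gm] by measurable
  have f2: "(\<lambda>x. ennreal (g (fst x + v))) \<in> borel_measurable (borel :: ((real^'n) \<times> (real^'m)) measure)"
    using measurable_compose[OF fst_v gm] by measurable
  have f1r: "(\<lambda>x. g (fst x)) \<in> borel_measurable (borel :: ((real^'n) \<times> (real^'m)) measure)"
    using measurable_compose[OF fst_borel gm] by simp
  have f2r: "(\<lambda>x. g (fst x + v)) \<in> borel_measurable (borel :: ((real^'n) \<times> (real^'m)) measure)"
    using measurable_compose[OF fst_v gm] by simp
  have uni: "\<And>i. i<n \<Longrightarrow> \<exists>K c'. \<nu>' i = W K c' \<and> POU_set a b K \<and> 0 < emeasure lborel (slice K c') \<and> emeasure lborel (slice K c') < \<infinity>"
    using hyp unfolding POU_uniforms_def by blast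
  have fin: "\<And>i. i<n \<Longrightarrow> finite_measure (\<nu>' i)"
    using uni W_prob prob_space.finite_measure by metis
  have sets: "\<And>i. i<n \<Longrightarrow> sets (\<nu>' i) = sets \<nu>"
    using uni snu by fastforce
  have finmu: "finite_measure \<nu>" using pnu prob_space.finite_measure by blast
  have cpos: "\<And>i. i<n \<Longrightarrow> c i \<ge> 0" using hyp by blast
  have eqm': "\<And>A. A\<in>sets \<nu> \<Longrightarrow> measure \<nu> A = (\<Sum>i<n. c i * measure (\<nu>' i) A)" using eqm by blast
  have m1: "(\<lambda>x. ennreal (g (fst x))) \<in> borel_measurable \<nu>"
    by (subst measurable_cong_sets[OF snu refl]) (rule f1)
  have m2: "(\<lambda>x. ennreal (g (fst x + v))) \<in> borel_measurable \<nu>"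
    by (subst measurable_cong_sets[OF snu refl]) (rule f2)
  have nnle: "(\<integral>\<^sup>+x. ennreal (g (fst x)) \<partial>\<nu>) \<le> (\<integral>\<^sup>+x. ennreal (g (fst x + v)) \<partial>\<nu>)"
  proof -
    have "(\<integral>\<^sup>+x. ennreal (g (fst x)) \<partial>\<nu>) = (\<Sum>i<n. ennreal (c i) * (\<integral>\<^sup>+x. ennreal (g (fst x)) \<partial>\<nu>' i))"
      by (rule hull_nn_integral[OF fin sets finmu cpos eqm' m1])
    also have "\<dots> \<le> (\<Sum>i<n. ennreal (c i) * (\<integral>\<^sup>+x. ennreal (g (fst x + v)) \<partial>\<nu>' i))"
    proof (rule sum_mono, rule mult_left_mono)
      fix i assume "i \<in> {..<n}"
      then obtain K c' where "\<nu>' i = W K c'" "POU_set a b K" using uni by blast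
      then show "(\<integral>\<^sup>+x. ennreal (g (fst x)) \<partial>\<nu>' i) \<le> (\<integral>\<^sup>+x. ennreal (g (fst x + v)) \<partial>\<nu>' i)"
        using uniform_TI[OF _ gm van v] by simp
    qed simp
    also have "\<dots> = (\<integral>\<^sup>+x. ennreal (g (fst x + v)) \<partial>\<nu>)"
      by (rule hull_nn_integral[OF fin sets finmu cpos eqm' m2, symmetric])
    finally show ?thesis .
  qed
  obtain B where B: "\<And>y. norm (g y) \<le> B" using g(2) unfolding bounded_iff by auto
  have fin2: "(\<integral>\<^sup>+x. ennreal (g (fst x + v)) \<partial>\<nu>) < \<infinity>"
  proof -
    have "(\<integral>\<^sup>+x. ennreal (g (fst x + v)) \<partial>\<nu>) \<le> (\<integral>\<^sup>+x. ennreal B \<partial>\<nu>)"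
      using B by (intro nn_integral_mono ennreal_leI) (auto dest: abs_le_D1)
    also have "\<dots> = ennreal B * emeasure \<nu> (space \<nu>)" by simp
    also have "\<dots> < \<infinity>" using prob_space.emeasure_space_1[OF pnu] by (simp add: ennreal_mult_less_top)
    finally show ?thesis .
  qed
  have nn1: "\<And>x. 0 \<le> g x" using van unfolding vanish_def by auto
  have "(\<integral>x. g (fst x) \<partial>\<nu>) = enn2real (\<integral>\<^sup>+x. ennreal (g (fst x)) \<partial>\<nu>)"
    using f1r snu nn1 by (intro integral_eq_nn_integral) (auto simp: measurable_cong_sets[OF snu refl])
  also have "\<dots> \<le> enn2real (\<integral>\<^sup>+x. ennreal (g (fst x + v)) \<partial>\<nu>)"
    using nnle fin2 by (intro enn2real_mono) auto
  also have "\<dots> = (\<integral>x. g (fst x + v) \<partial>\<nu>)"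
    using f2r snu nn1 by (intro integral_eq_nn_integral[symmetric]) (auto simp: measurable_cong_sets[OF snu refl])
  finally show ?thesis .
qed

lemma POU_TI:
  fixes \<mu> :: "((real^'n) \<times> (real^'m)) measure"
  assumes mu: "\<mu> \<in> POU_distributions a b"
    and g: "continuous_on UNIV g" "bounded (range g)" and van: "vanish a v g" and v: "\<forall>k. 0 \<le> v$k"
  shows "(\<integral>x. g (fst x) \<partial>\<mu>) \<le> (\<integral>x. g (fst x + v) \<partial>\<mu>)"
proof (rule ccontr)
  assume neg: "\<not> ?thesis"
  define \<phi> where "\<phi> = (\<lambda>x::(real^'n)\<times>(real^'m). g (fst x))"
  define \<psi> where "\<psi> = (\<lambda>x::(real^'n)\<times>(real^'m). g (fst x + v))"
  define e where "e = ((\<integral>x. \<phi> x \<partial>\<mu>) - (\<integral>x. \<psi> x \<partial>\<mu>)) / 2"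
  have e2: "(\<integral>x. \<phi> x \<partial>\<mu>) - (\<integral>x. \<psi> x \<partial>\<mu>) = 2 * e" unfolding e_def by simp
  have e: "e > 0" using neg unfolding e_def \<phi>_def \<psi>_def by simp
  have c1: "continuous_on UNIV \<phi>" unfolding \<phi>_def
    by (rule continuous_on_compose2[OF g(1)]) (auto intro!: continuous_intros)
  have c2: "continuous_on UNIV \<psi>" unfolding \<psi>_def
    by (rule continuous_on_compose2[OF g(1)]) (auto intro!: continuous_intros)
  have b1: "bounded (range \<phi>)" unfolding \<phi>_def by (rule bounded_subset[OF g(2)]) auto
  have b2: "bounded (range \<psi>)" unfolding \<psi>_def by (rule bounded_subset[OF g(2)]) auto
  have "\<exists>\<nu>\<in>{\<mu> \<in> distributions_on (D0 a b). measure_convex_hull (POU_uniforms a b) \<mu>}.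
          \<forall>f\<in>{\<phi>,\<psi>}. \<bar>(\<integral>x. f x \<partial>\<mu>) - (\<integral>x. f x \<partial>\<nu>)\<bar> < e"
    using mu e c1 c2 b1 b2 unfolding POU_distributions_def weak_closure_def
    by (elim CollectE conjE) (erule allE[of _ "{\<phi>,\<psi>}"], erule allE[of _ e], auto)
  then obtain \<nu> where nu: "\<nu> \<in> distributions_on (D0 a b)" "measure_convex_hull (POU_uniforms a b) \<nu>"
    and a1: "\<bar>(\<integral>x. \<phi> x \<partial>\<mu>) - (\<integral>x. \<phi> x \<partial>\<nu>)\<bar> < e"
    and a2: "\<bar>(\<integral>x. \<psi> x \<partial>\<mu>) - (\<integral>x. \<psi> x \<partial>\<nu>)\<bar> < e" by auto
  have "(\<integral>x. \<phi> x \<partial>\<nu>) \<le> (\<integral>x. \<psi> x \<partial>\<nu>)"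
    unfolding \<phi>_def \<psi>_def by (rule hull_TI[OF nu g van v])
  then show False using a1 a2 using e2 unfolding abs_less_iff by linarith
qed




definition cube :: "real^'n \<Rightarrow> real \<Rightarrow> (real^'n) set" where
  "cube p \<delta> = {y. \<forall>k. p$k < y$k \<and> y$k \<le> p$k + \<delta>}"

lemma cube_borel[measurable]: "cube p \<delta> \<in> sets borel"
  unfolding cube_def by measurable

lemma cube_shift: "y \<in> cube (p - v) \<delta> \<longleftrightarrow> y + v \<in> cube p \<delta>"
  unfolding cube_def by (auto simp: algebra_simps)

definition hh :: "real \<Rightarrow> real \<Rightarrow> real \<Rightarrow> real \<Rightarrow> real" where
  "hh \<delta> n p t = max 0 (min 1 (min (n*(t - p)) (1 + n*(p + \<delta> - t))))"

lemma hh_zero: "n*(t-p) \<le> 0 \<Longrightarrow> hh \<delta> n p t = 0"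
proof -
  assume a: "n*(t-p) \<le> 0"
  have "min 1 (min (n*(t-p)) (1 + n*(p + \<delta> - t))) \<le> 0" using a by (simp add: min_le_iff_disj)
  then show ?thesis unfolding hh_def by (simp add: max_absorb1)
qed

lemma hh_zero2: "1 + n*(p+\<delta>-t) \<le> 0 \<Longrightarrow> hh \<delta> n p t = 0"
proof -
  assume a: "1 + n*(p+\<delta>-t) \<le> 0"
  have "min 1 (min (n*(t-p)) (1 + n*(p + \<delta> - t))) \<le> 0" using a by (simp add: min_le_iff_disj)
  then show ?thesis unfolding hh_def by (simp add: max_absorb1)
qed

lemma hh_one: "1 \<le> n*(t-p) \<Longrightarrow> 0 \<le> n*(p+\<delta>-t) \<Longrightarrow> hh \<delta> n p t = 1"
proof -
  assume a: "1 \<le> n*(t-p)" "0 \<le> n*(p+\<delta>-t)"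
  then have "min 1 (min (n*(t-p)) (1 + n*(p + \<delta> - t))) = 1" by (simp add: min_def)
  then show ?thesis unfolding hh_def by simp
qed

lemma eventually_big:
  assumes "(c::real) > 0" shows "eventually (\<lambda>n. K \<le> real (Suc n) * c) sequentially"
proof -
  obtain N :: nat where N: "K / c < real N" using reals_Archimedean2 by blast
  show ?thesis
  proof (rule eventually_sequentiallyI[of N])
    fix n assume "N \<le> n"
    then have "real N * c \<le> real (Suc n) * c" using assms by (intro mult_right_mono) auto
    moreover have "K < real N * c" using N assms by (simp add: divide_less_eq)
    ultimately show "K \<le> real (Suc n) * c" by linarith
  qed
qed

lemma hh_lim: "(\<lambda>n. hh \<delta> (real (Suc n)) p t) \<longlonglongrightarrow> indicator {p<..p+\<delta>} t"
proof (cases "t \<le> p")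
  case True
  then have "\<And>n. hh \<delta> (real (Suc n)) p t = 0"
    by (intro hh_zero) (simp add: mult_nonneg_nonpos)
  then show ?thesis using True by simp
next
  case False
  show ?thesis
  proof (cases "t \<le> p + \<delta>")
    case True
    have ev: "eventually (\<lambda>n. 1 \<le> real (Suc n) * (t - p)) sequentially"
      using False by (intro eventually_big) auto
    have "eventually (\<lambda>n. hh \<delta> (real (Suc n)) p t = 1) sequentially"
      using ev
    proof eventually_elim
      case (elim n)
      have "0 \<le> real (Suc n) * (p + \<delta> - t)" using True by simp
      then show ?case using elim by (intro hh_one) auto
    qed
    then have "(\<lambda>n. hh \<delta> (real (Suc n)) p t) \<longlonglongrightarrow> 1" by (rule tendsto_eventually)
    then show ?thesis using True False by simp
  next
    case F2: False
    have ev: "eventually (\<lambda>n. 1 \<le> real (Suc n) * (t - p - \<delta>)) sequentially"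
      using F2 by (intro eventually_big) auto
    have "eventually (\<lambda>n. hh \<delta> (real (Suc n)) p t = 0) sequentially"
      using ev
    proof eventually_elim
      case (elim n)
      then have "1 + real (Suc n) * (p + \<delta> - t) \<le> 0" by (simp add: algebra_simps)
      then show ?case by (rule hh_zero2)
    qed
    then have "(\<lambda>n. hh \<delta> (real (Suc n)) p t) \<longlonglongrightarrow> 0" by (rule tendsto_eventually)
    then show ?thesis using F2 by simp
  qed
qed

definition gg :: "real \<Rightarrow> nat \<Rightarrow> real^'n \<Rightarrow> real^'n \<Rightarrow> real" where
  "gg \<delta> n p y = (\<Prod>k\<in>UNIV. hh \<delta> (real (Suc n)) (p$k) (y$k))"

lemma hh_bounds: "0 \<le> hh \<delta> n p t" "hh \<delta> n p t \<le> 1"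
  unfolding hh_def by auto

lemma gg_bounds: "0 \<le> gg \<delta> n p y" "gg \<delta> n p y \<le> 1"
  unfolding gg_def by (auto intro!: prod_nonneg prod_le_1 hh_bounds)

lemma gg_abs: "\<bar>gg \<delta> n p y\<bar> \<le> 1"
  using gg_bounds[of \<delta> n p y] by (simp add: abs_le_iff)

lemma gg_cont: "continuous_on UNIV (gg \<delta> n p)"
  unfolding gg_def hh_def by (intro continuous_intros)

lemma gg_bounded: "bounded (range (gg \<delta> n p))"
  unfolding bounded_iff by (intro exI[of _ 1]) (auto intro!: abs_leI gg_bounds order_trans[OF _ gg_bounds(2)] simp del: gg_def)

lemma gg_vanish:
  assumes "\<forall>k. a$k + v$k \<le> p$k"
  shows "vanish a v (gg \<delta> n p)"
  unfolding vanish_def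
proof (intro conjI allI impI)
  fix y show "0 \<le> gg \<delta> n p y" by (rule gg_bounds)
next
  fix y k assume "gg \<delta> n p y \<noteq> 0"
  then have "hh \<delta> (real (Suc n)) (p$k) (y$k) \<noteq> 0" unfolding gg_def by auto
  then have "p$k < y$k" using hh_zero[of "real (Suc n)" "y$k" "p$k" \<delta>]
    by (cases "p$k < y$k") (auto simp: mult_nonneg_nonpos)
  then show "a$k + v$k \<le> y$k" using assms by (smt (verit))
qed

lemma gg_lim: "(\<lambda>n. gg \<delta> n p y) \<longlonglongrightarrow> indicator (cube p \<delta>) y"
proof -
  have "indicator (cube p \<delta>) y = (\<Prod>k\<in>UNIV. (indicator {p$k<..p$k+\<delta>} (y$k) :: real))"
    unfolding cube_def by (auto simp: indicator_def prod_zero_iff)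
  then show ?thesis unfolding gg_def by (simp only:) (intro tendsto_prod hh_lim)
qed

lemma cube_ineq:
  fixes \<mu> :: "((real^'n) \<times> (real^'m)) measure"
  assumes fin: "finite_measure \<mu>" and smu: "sets \<mu> = sets borel"
    and TI: "\<And>g. continuous_on UNIV g \<Longrightarrow> bounded (range g) \<Longrightarrow> vanish a v g \<Longrightarrow> (\<integral>x. g (fst x) \<partial>\<mu>) \<le> (\<integral>x. g (fst x + v) \<partial>\<mu>)"
    and pv: "\<forall>k. a$k + v$k \<le> p$k"
  shows "measure \<mu> (fst -` cube p \<delta>) \<le> measure \<mu> (fst -` cube (p - v) \<delta>)"
proof -
  have fv: "(\<lambda>x::(real^'n)\<times>(real^'m). fst x + v) \<in> borel \<rightarrow>\<^sub>M borel"
    by (rule borel_measurable_continuous_onI) (intro continuous_intros)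
  have mb: "f \<in> borel_measurable \<mu>" if "f \<in> borel_measurable borel" for f :: "(real^'n)\<times>(real^'m) \<Rightarrow> real"
    by (subst measurable_cong_sets[OF smu refl]) (rule that)
  have gm: "gg \<delta> n p \<in> borel_measurable borel" for n
    by (rule borel_measurable_continuous_onI[OF gg_cont])
  have S1: "fst -` cube p \<delta> \<in> sets \<mu>" unfolding smu
    using measurable_sets_borel[OF fst_borel[where 'a="real^'n" and 'b="real^'m"] cube_borel[of p \<delta>]] by simp
  have S2: "fst -` cube (p-v) \<delta> \<in> sets \<mu>" unfolding smu
    using measurable_sets_borel[OF fst_borel[where 'a="real^'n" and 'b="real^'m"] cube_borel[of "p-v" \<delta>]] by simp
  have int1: "integrable \<mu> (\<lambda>_. 1::real)" using fin by (simp add: finite_measure.integrable_const)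
  have L1: "(\<lambda>n. \<integral>x. gg \<delta> n p (fst x) \<partial>\<mu>) \<longlonglongrightarrow> (\<integral>x. indicator (fst -` cube p \<delta>) x \<partial>\<mu>)"
  proof (rule integral_dominated_convergence[where w="\<lambda>_. 1"])
    show "indicator (fst -` cube p \<delta>) \<in> borel_measurable \<mu>" using S1 by simp
    show "(\<lambda>x. gg \<delta> n p (fst x)) \<in> borel_measurable \<mu>" for n
      by (rule mb, rule measurable_compose[OF fst_borel gm])
    show "integrable \<mu> (\<lambda>_. 1::real)" by (rule int1)
    show "AE x in \<mu>. (\<lambda>n. gg \<delta> n p (fst x)) \<longlonglongrightarrow> indicator (fst -` cube p \<delta>) x"
      using gg_lim by (intro AE_I2) (simp only: indicator_vimage)
    show "AE x in \<mu>. norm (gg \<delta> n p (fst x)) \<le> 1" for n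
      using gg_abs by (intro AE_I2) simp
  qed
  have L2: "(\<lambda>n. \<integral>x. gg \<delta> n p (fst x + v) \<partial>\<mu>) \<longlonglongrightarrow> (\<integral>x. indicator (fst -` cube (p-v) \<delta>) x \<partial>\<mu>)"
  proof (rule integral_dominated_convergence[where w="\<lambda>_. 1"])
    show "indicator (fst -` cube (p-v) \<delta>) \<in> borel_measurable \<mu>" using S2 by simp
    show "(\<lambda>x. gg \<delta> n p (fst x + v)) \<in> borel_measurable \<mu>" for n
      by (rule mb, rule measurable_compose[OF fv gm])
    show "integrable \<mu> (\<lambda>_. 1::real)" by (rule int1)
    show "AE x in \<mu>. (\<lambda>n. gg \<delta> n p (fst x + v)) \<longlonglongrightarrow> indicator (fst -` cube (p-v) \<delta>) x"
    proof (intro AE_I2)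
      fix x :: "(real^'n)\<times>(real^'m)"
      have "indicator (fst -` cube (p-v) \<delta>) x = (indicator (cube p \<delta>) (fst x + v) :: real)"
        by (simp add: indicator_def cube_shift)
      then show "(\<lambda>n. gg \<delta> n p (fst x + v)) \<longlonglongrightarrow> indicator (fst -` cube (p-v) \<delta>) x"
        using gg_lim by simp
    qed
    show "AE x in \<mu>. norm (gg \<delta> n p (fst x + v)) \<le> 1" for n
      using gg_abs by (intro AE_I2) simp
  qed
  have "(\<integral>x. (indicator (fst -` cube p \<delta>) x :: real) \<partial>\<mu>) \<le> (\<integral>x. indicator (fst -` cube (p-v) \<delta>) x \<partial>\<mu>)"
    using L1 L2 by (rule LIMSEQ_le) (use TI[OF gg_cont gg_bounded gg_vanish[OF pv]] in blast)
  then show ?thesis using S1 S2 fin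
    by (simp add: finite_measure.emeasure_eq_measure)
qed




definition vecn :: "('n::finite \<Rightarrow> nat) \<Rightarrow> real^'n" where "vecn j = (\<chi> i. real (j i))"

definition Q :: "real^'n \<Rightarrow> nat \<Rightarrow> ('n \<Rightarrow> nat) \<Rightarrow> (real^'n) set" where
  "Q a k j = cube (a + ((1/2)^k) *\<^sub>R vecn j) ((1/2)^k)"

definition J :: "real^'n \<Rightarrow> nat \<Rightarrow> (real^'n) set \<Rightarrow> (real^'n) set" where
  "J a k U = \<Union> (Q a k ` {j. Q a k j \<subseteq> U})"

lemma Q_borel[measurable]: "Q a k j \<in> sets borel"
  unfolding Q_def by simp

lemma J_borel[measurable]: "J a k U \<in> sets borel"
  unfolding J_def by (rule sets.countable_UN') (auto intro: countable_subset[OF subset_UNIV countableI_type])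

lemma J_sub: "J a k U \<subseteq> U"
  unfolding J_def by auto

lemma coord_unique:
  fixes m m' :: nat and \<delta> :: real
  assumes "\<delta> > 0" "c + \<delta>*m < x" "x \<le> c + \<delta>*m + \<delta>" "c + \<delta>*m' < x" "x \<le> c + \<delta>*m' + \<delta>"
  shows "m = m'"
proof -
  have "\<delta>*m < \<delta>*(m'+1)" using assms by (simp add: algebra_simps)
  then have "real m < real m' + 1" using assms(1) by (simp add: mult_less_cancel_left_pos)
  moreover have "\<delta>*m' < \<delta>*(m+1)" using assms by (simp add: algebra_simps)
  then have "real m' < real m + 1" using assms(1) by (simp add: mult_less_cancel_left_pos)
  ultimately show ?thesis by linarith
qed

lemma Q_disj: "disjoint_family_on (Q a k) I"
  unfolding disjoint_family_on_def
proof (intro ballI impI)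
  fix j j' assume "j \<in> I" "j' \<in> I" "j \<noteq> j'"
  show "Q a k j \<inter> Q a k j' = {}"
  proof (rule ccontr)
    assume "Q a k j \<inter> Q a k j' \<noteq> {}"
    then obtain x where x: "x \<in> Q a k j" "x \<in> Q a k j'" by auto
    have "j i = j' i" for i
      using x unfolding Q_def cube_def vecn_def
      by (intro coord_unique[of "(1/2)^k" "a$i" "j i" "x$i" "j' i"]) (auto simp: mult.commute)
    then show False using \<open>j \<noteq> j'\<close> by auto
  qed
qed

lemma point_in_Q:
  assumes "\<forall>i. a$i < x$i"
  obtains j where "x \<in> Q a k j"
proof -
  define \<delta> :: real where "\<delta> = (1/2)^k"
  have d: "\<delta> > 0" unfolding \<delta>_def by simp
  define j where "j i = nat (\<lceil>(x$i - a$i)/\<delta>\<rceil> - 1)" for i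
  have "x \<in> Q a k j"
    unfolding Q_def cube_def vecn_def \<delta>_def[symmetric]
  proof (intro CollectI allI conjI)
    fix i
    define w where "w = (x$i - a$i)/\<delta>"
    have w: "w > 0" unfolding w_def using assms d by simp
    have c1: "\<lceil>w\<rceil> \<ge> 1" using w by (simp add: one_le_ceiling)
    have rj: "real (j i) = real_of_int \<lceil>w\<rceil> - 1" unfolding j_def w_def[symmetric] using c1 by simp
    have lt: "real (j i) < w" unfolding rj using ceiling_correct[of w] by linarith
    have le: "w \<le> real (j i) + 1" unfolding rj using ceiling_correct[of w] by linarith
    have xw: "x$i = a$i + \<delta> * w" unfolding w_def using d by simp
    show "(a + \<delta> *\<^sub>R (\<chi> i. real (j i))) $ i < x $ i"
      using lt d unfolding xw by simp
    have "\<delta> * w \<le> \<delta> * (real (j i) + 1)" using le d by (intro mult_left_mono) auto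
    then show "x $ i \<le> (a + \<delta> *\<^sub>R (\<chi> i. real (j i))) $ i + \<delta>"
      unfolding xw by (simp add: algebra_simps)
  qed
  then show ?thesis using that by blast
qed

lemma Q_small:
  fixes x y :: "real^'n"
  assumes "x \<in> Q a k j" "y \<in> Q a k j"
  shows "dist x y \<le> real CARD('n) * (1/2)^k"
proof -
  have "\<bar>(x - y)$i\<bar> \<le> (1/2)^k" for i :: 'n
  proof -
    have "a$i + (1/2)^k * vecn j $ i < x$i \<and> x$i \<le> a$i + (1/2)^k * vecn j $ i + (1/2)^k"
         "a$i + (1/2)^k * vecn j $ i < y$i \<and> y$i \<le> a$i + (1/2)^k * vecn j $ i + (1/2)^k"
      using assms unfolding Q_def cube_def by auto
    then show ?thesis by (simp add: abs_le_iff)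
  qed
  then have "(\<Sum>i\<in>UNIV. \<bar>(x - y)$i\<bar>) \<le> (\<Sum>i\<in>(UNIV::'n set). (1/2)^k)"
    by (intro sum_mono) auto
  then show ?thesis using norm_le_l1_cart[of "x - y"] unfolding dist_norm by simp
qed

lemma J_indicator_lim:
  fixes a x :: "real^'n"
  assumes U: "open U" "U \<subseteq> {y. \<forall>i. a$i < y$i}"
  shows "(\<lambda>k. indicator (J a k U) x :: real) \<longlonglongrightarrow> indicator U x"
proof (cases "x \<in> U")
  case False
  then have "\<And>k. x \<notin> J a k U" using J_sub by blast
  then show ?thesis using False by simp
next
  case True
  obtain e where e: "e > 0" "ball x e \<subseteq> U" using U(1) True open_contains_ball by blast
  have ax: "\<forall>i. a$i < x$i" using U(2) True by auto
  have "(\<lambda>k. real CARD('n) * (1/2)^k) \<longlonglongrightarrow> real CARD('n) * (0::real)"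
    by (intro tendsto_mult tendsto_const LIMSEQ_power_zero) auto
  then have "eventually (\<lambda>k. real CARD('n) * (1/2)^k < e) sequentially"
    using e(1) by (simp add: order_tendsto_iff)
  then have "eventually (\<lambda>k. x \<in> J a k U) sequentially"
  proof eventually_elim
    case (elim k)
    obtain j where j: "x \<in> Q a k j" using point_in_Q[OF ax] by blast
    have "Q a k j \<subseteq> U"
    proof
      fix y assume "y \<in> Q a k j"
      then have "dist x y < e" using Q_small[OF j] elim by (smt (verit))
      then show "y \<in> U" using e(2) by auto
    qed
    then show ?case using j unfolding J_def by auto
  qed
  then have "eventually (\<lambda>k. indicator (J a k U) x = (1::real)) sequentially"
    by (rule eventually_mono) simp
  then show ?thesis using True by (simp add: tendsto_eventually)
qed

lemma J_lim:
  fixes \<rho> :: "(real^'n) measure"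
  assumes fin: "finite_measure \<rho>" and s: "sets \<rho> = sets borel"
    and U: "open U" "U \<subseteq> {y. \<forall>i. a$i < y$i}"
  shows "(\<lambda>k. measure \<rho> (J a k U)) \<longlonglongrightarrow> measure \<rho> U"
proof -
  have Ub: "U \<in> sets \<rho>" using U(1) s by simp
  have Jb: "J a k U \<in> sets \<rho>" for k using s by simp
  have "(\<lambda>k. \<integral>x. (indicator (J a k U) x :: real) \<partial>\<rho>) \<longlonglongrightarrow> (\<integral>x. indicator U x \<partial>\<rho>)"
  proof (rule integral_dominated_convergence[where w="\<lambda>_. 1"])
    show "indicator U \<in> borel_measurable \<rho>" using Ub by simp
    show "indicator (J a k U) \<in> borel_measurable \<rho>" for k using Jb by simp
    show "integrable \<rho> (\<lambda>_. 1::real)" using fin by (simp add: finite_measure.integrable_const)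
    show "AE x in \<rho>. (\<lambda>k. indicator (J a k U) x :: real) \<longlonglongrightarrow> indicator U x"
      using J_indicator_lim[OF U] by (intro AE_I2) blast
    show "AE x in \<rho>. norm (indicator (J a k U) x :: real) \<le> 1" for k
      by (intro AE_I2) (simp add: indicator_def)
  qed
  then show ?thesis using Ub Jb by simp
qed

lemma J_measure:
  fixes \<rho> \<sigma> :: "(real^'n) measure"
  assumes s1: "sets \<rho> = sets borel" and s2: "sets \<sigma> = sets borel"
    and eq: "\<And>j. Q a k j \<subseteq> U \<Longrightarrow> emeasure \<rho> (Q a k j) = ennreal r * emeasure \<sigma> (Q a k j)"
  shows "emeasure \<rho> (J a k U) = ennreal r * emeasure \<sigma> (J a k U)"
proof -
  let ?I = "{j. Q a k j \<subseteq> U}"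
  have cI: "countable ?I" by (rule countable_subset[OF subset_UNIV countableI_type])
  have "emeasure \<rho> (J a k U) = (\<integral>\<^sup>+j. emeasure \<rho> (Q a k j) \<partial>count_space ?I)"
    unfolding J_def by (rule emeasure_UN_countable) (use s1 cI Q_disj in auto)
  also have "\<dots> = (\<integral>\<^sup>+j. ennreal r * emeasure \<sigma> (Q a k j) \<partial>count_space ?I)"
    by (rule nn_integral_cong) (simp add: eq)
  also have "\<dots> = ennreal r * (\<integral>\<^sup>+j. emeasure \<sigma> (Q a k j) \<partial>count_space ?I)"
    by (rule nn_integral_cmult) simp
  also have "(\<integral>\<^sup>+j. emeasure \<sigma> (Q a k j) \<partial>count_space ?I) = emeasure \<sigma> (J a k U)"
    unfolding J_def by (rule emeasure_UN_countable[symmetric]) (use s2 cI Q_disj in auto)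
  finally show ?thesis .
qed




lemma hyperplane_null: "{y::real^'n. y$i = c} \<in> null_sets lborel"
proof -
  have eq: "{y::real^'n. y$i = c} = {y. axis i 1 \<bullet> y = c}"
    by (auto simp: cart_eq_inner_axis inner_commute)
  have "negligible {y::real^'n. axis i 1 \<bullet> y = c}"
    by (rule negligible_hyperplane) (simp add: axis_eq_0_iff)
  then have "{y::real^'n. y$i = c} \<in> null_sets lebesgue" unfolding eq negligible_iff_null_sets .
  moreover have "{y::real^'n. y$i = c} \<in> sets lborel"
  proof -
    have "closed {y::real^'n. axis i 1 \<bullet> y = c}" by (rule closed_hyperplane)
    then show ?thesis unfolding eq[symmetric] by simp
  qed
  ultimately show ?thesis using null_sets_completion_iff by blast
qed

lemma U0_props:
  fixes S :: "(real^'n) set" and a :: "real^'n"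
  assumes Sb: "S \<in> sets borel" and Sfin: "emeasure lborel S < \<infinity>"
    and down: "\<And>y u. y \<in> S \<Longrightarrow> (\<forall>i. a$i \<le> u$i \<and> u$i \<le> y$i) \<Longrightarrow> u \<in> S"
    and ge: "\<And>y. y \<in> S \<Longrightarrow> \<forall>i. a$i \<le> y$i"
  defines "U0 \<equiv> \<Union>{box a y | y. y \<in> S \<and> (\<forall>i. a$i < y$i)}"
  shows "open U0" "U0 \<subseteq> S" "U0 \<subseteq> {y. \<forall>i. a$i < y$i}" "emeasure lborel U0 = emeasure lborel S"
proof -
  show op: "open U0" unfolding U0_def by (intro open_Union) auto
  show sub: "U0 \<subseteq> S"
  proof
    fix u assume "u \<in> U0"
    then obtain y where "y \<in> S" "u \<in> box a y" unfolding U0_def by auto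
    then show "u \<in> S" by (intro down[of y u]) (auto simp: mem_box_cart less_imp_le)
  qed
  show pos: "U0 \<subseteq> {y. \<forall>i. a$i < y$i}" unfolding U0_def by (auto simp: mem_box_cart)
  define P where "P = {y::real^'n. \<forall>i. a$i < y$i}"
  define N where "N = (\<Union>i. {y::real^'n. y$i = a$i})"
  have Nnull: "N \<in> null_sets lborel" unfolding N_def by (intro null_sets_UN hyperplane_null)
  have SN: "S - N \<subseteq> S \<inter> P"
  proof
    fix y assume y: "y \<in> S - N"
    then have "\<forall>i. a$i \<le> y$i" "\<forall>i. y$i \<noteq> a$i" using ge unfolding N_def by auto
    then have "\<forall>i. a$i < y$i" by (metis order.not_eq_order_implies_strict)
    then show "y \<in> S \<inter> P" using y unfolding P_def by auto
  qed
  have U0b: "U0 \<in> sets lborel" using op by simp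
  have SPb: "S \<inter> P \<in> sets lborel" unfolding P_def using Sb by measurable
  have eSP: "emeasure lborel (S \<inter> P) = emeasure lborel S"
  proof (rule antisym)
    show "emeasure lborel (S \<inter> P) \<le> emeasure lborel S" using Sb by (intro emeasure_mono) auto
    have "emeasure lborel S = emeasure lborel (S - N)" using Nnull Sb by (simp add: emeasure_Diff_null_set)
    also have "\<dots> \<le> emeasure lborel (S \<inter> P)" using SN SPb by (intro emeasure_mono) auto
    finally show "emeasure lborel S \<le> emeasure lborel (S \<inter> P)" .
  qed
  define D where "D = DIM(real^'n)"
  have scale: "ennreal (l^D) * emeasure lborel S \<le> emeasure lborel U0" if l: "0 < l" "l < 1" for l :: real
  proof -
    define T where "T x = (1 - l) *\<^sub>R a + l *\<^sub>R x" for x :: "real^'n"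
    have Tm: "T \<in> borel \<rightarrow>\<^sub>M borel" unfolding T_def by (rule borel_measurable_continuous_onI) (intro continuous_intros)
    have aff: "lborel = density (distr lborel borel T) (\<lambda>_. \<bar>l\<bar>^D)"
      unfolding T_def D_def using lborel_affine[of l "(1 - l) *\<^sub>R a"] l by simp
    have "emeasure lborel U0 = emeasure (density (distr lborel borel T) (\<lambda>_. \<bar>l\<bar>^D)) U0"
      by (subst aff) simp
    also have "\<dots> = (\<integral>\<^sup>+x. ennreal (\<bar>l\<bar>^D) * indicator U0 x \<partial>distr lborel borel T)"
      using U0b by (subst emeasure_density) (auto intro!: nn_integral_cong simp: ennreal_power)
    also have "\<dots> = ennreal (l^D) * emeasure (distr lborel borel T) U0"
      using U0b l by (subst nn_integral_cmult_indicator) auto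
    also have "emeasure (distr lborel borel T) U0 = emeasure lborel (T -` U0)"
      using U0b Tm by (subst emeasure_distr) auto
    finally have eq: "emeasure lborel U0 = ennreal (l^D) * emeasure lborel (T -` U0)" .
    have "S \<inter> P \<subseteq> T -` U0"
    proof
      fix y assume y: "y \<in> S \<inter> P"
      have "T y \<in> box a y"
        unfolding mem_box_cart T_def
      proof
        fix i
        have ai: "a$i < y$i" using y unfolding P_def by auto
        have "(1 - l) * a$i + l * y$i = a$i + l * (y$i - a$i)" by (simp add: algebra_simps)
        moreover have "0 < l * (y$i - a$i)" using ai l by simp
        moreover have "l * (y$i - a$i) < 1 * (y$i - a$i)" using ai l by (intro mult_strict_right_mono) auto
        ultimately show "a $ i < ((1 - l) *\<^sub>R a + l *\<^sub>R y) $ i \<and> ((1 - l) *\<^sub>R a + l *\<^sub>R y) $ i < y $ i"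
          by simp
      qed
      moreover have "box a y \<subseteq> U0" using y unfolding U0_def P_def by auto
      ultimately show "y \<in> T -` U0" by auto
    qed
    then have "emeasure lborel (S \<inter> P) \<le> emeasure lborel (T -` U0)"
      using Tm U0b by (intro emeasure_mono) (auto simp: measurable_sets_borel)
    then show ?thesis unfolding eq eSP by (intro mult_left_mono) auto
  qed
  have U0le: "emeasure lborel U0 \<le> emeasure lborel S" using sub Sb by (intro emeasure_mono) auto
  have U0fin: "emeasure lborel U0 < \<infinity>" using U0le Sfin by (rule order.strict_trans1)
  have real: "(l^D) * measure lborel S \<le> measure lborel U0" if "0 < l" "l < 1" for l :: real
  proof -
    have "ennreal (l^D * measure lborel S) = ennreal (l^D) * emeasure lborel S"
      using Sfin that by (simp add: emeasure_eq_ennreal_measure ennreal_mult less_top)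
    also have "\<dots> \<le> emeasure lborel U0" by (rule scale[OF that])
    also have "\<dots> = ennreal (measure lborel U0)" using U0fin by (simp add: emeasure_eq_ennreal_measure less_top)
    finally have "ennreal (l^D * measure lborel S) \<le> ennreal (measure lborel U0)" .
    then show ?thesis by (simp add: ennreal_le_iff2) (smt (verit) measure_nonneg)
  qed
  have lim: "(\<lambda>n. (1 - (1/2)^(Suc n))^D * measure lborel S) \<longlonglongrightarrow> (1 - 0)^D * measure lborel S"
    by (intro tendsto_intros LIMSEQ_power_zero[THEN LIMSEQ_Suc]) auto
  have lim': "(\<lambda>n. (1 - (1/2)^(Suc n))^D * measure lborel S) \<longlonglongrightarrow> measure lborel S"
    using lim by simp
  have "measure lborel S \<le> measure lborel U0"
  proof (rule LIMSEQ_le_const2[OF lim'])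
    show "\<exists>N. \<forall>n\<ge>N. (1 - (1/2)^(Suc n))^D * measure lborel S \<le> measure lborel U0"
    proof (intro exI allI impI)
      fix n :: nat
      have "(1/2::real)^(Suc n) \<le> 1/2" by (simp add: power_le_one)
      then have "(1/2::real)^(Suc n) < 1" by simp
      moreover have "0 < (1/2::real)^(Suc n)" by simp
      ultimately show "(1 - (1/2)^(Suc n))^D * measure lborel S \<le> measure lborel U0"
        by (intro real) auto
    qed
  qed
  then have "emeasure lborel S \<le> emeasure lborel U0"
    using Sfin U0fin by (simp add: emeasure_eq_ennreal_measure less_top)
  moreover have "emeasure lborel U0 \<le> emeasure lborel S" using sub Sb by (intro emeasure_mono) auto
  ultimately show "emeasure lborel U0 = emeasure lborel S" by simp
qed




lemma lborel_cube_shift: "emeasure lborel (cube (p - v) \<delta>) = emeasure lborel (cube p \<delta>)"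
proof -
  have "emeasure lborel (cube p \<delta>) = emeasure (distr lborel borel ((+) v)) (cube p \<delta>)"
    by (simp add: lborel_distr_plus)
  also have "\<dots> = emeasure lborel ((+) v -` cube p \<delta>)"
    by (subst emeasure_distr) auto
  also have "(+) v -` cube p \<delta> = cube (p - v) \<delta>"
    by (auto simp: cube_shift add.commute)
  finally show ?thesis by simp
qed

lemma component_eq:
  fixes a :: "real^'n" and b :: "'m::finite \<Rightarrow> ereal" and K :: "((real^'n) \<times> (real^'m)) set"
    and \<mu>1 \<mu>2 :: "((real^'n) \<times> (real^'m)) measure"
  assumes pou: "POU_set a b K" and Kc: "K \<subseteq> {(y,z). z = c}"
    and Vpos: "0 < emeasure lborel (slice K c)" and Vfin: "emeasure lborel (slice K c) < \<infinity>"
    and p1: "prob_space \<mu>1" and s1: "sets \<mu>1 = sets borel"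
    and p2: "prob_space \<mu>2" and s2: "sets \<mu>2 = sets borel"
    and t: "0 < t" "t < 1"
    and dec: "\<forall>A \<in> sets (W K c). measure (W K c) A = t * measure \<mu>1 A + (1-t) * measure \<mu>2 A"
    and C1: "\<And>v p \<delta>. \<forall>k. 0 \<le> v$k \<Longrightarrow> \<forall>k. a$k + v$k \<le> p$k \<Longrightarrow> measure \<mu>1 (fst -` cube p \<delta>) \<le> measure \<mu>1 (fst -` cube (p - v) \<delta>)"
    and C2: "\<And>v p \<delta>. \<forall>k. 0 \<le> v$k \<Longrightarrow> \<forall>k. a$k + v$k \<le> p$k \<Longrightarrow> measure \<mu>2 (fst -` cube p \<delta>) \<le> measure \<mu>2 (fst -` cube (p - v) \<delta>)"
  shows "\<mu>1 = W K c"
proof -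
  define S where "S = slice K c"
  have Kb: "K \<in> sets borel" using pou unfolding POU_set_def by auto
  have Sb[measurable]: "S \<in> sets borel" unfolding S_def by (rule slice_borel[OF Kb])
  define V where "V = measure lborel S"
  have eV: "emeasure lborel S = ennreal V" unfolding V_def using Vfin S_def by (simp add: emeasure_eq_ennreal_measure less_top)
  have V0: "V > 0" using Vpos eV S_def by simp
  define \<sigma> where "\<sigma> = uniform_measure lborel S"
  have ps: "prob_space \<sigma>" unfolding \<sigma>_def using Vpos Vfin S_def by (intro prob_space_uniform_measure) auto
  have ss: "sets \<sigma> = sets borel" unfolding \<sigma>_def by simp
  have msig: "measure \<sigma> B = measure lborel (S \<inter> B) / V" if "B \<in> sets borel" for B
    unfolding \<sigma>_def V_def using Vpos Vfin S_def that by (subst measure_uniform_measure) auto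
  have Wd: "W K c = distr \<sigma> borel (\<lambda>y. (y,c))" unfolding W_def \<sigma>_def S_def by simp
  have pc: "(\<lambda>y. (y,c)) \<in> \<sigma> \<rightarrow>\<^sub>M (borel :: ((real^'n) \<times> (real^'m)) measure)"
    by (subst measurable_cong_sets[OF ss refl]) (rule pair_c_borel)
  have sp1: "space \<mu>1 = UNIV" using s1 by (metis sets_eq_imp_space_eq space_borel)
  have sp2: "space \<mu>2 = UNIV" using s2 by (metis sets_eq_imp_space_eq space_borel)
  have sps: "space \<sigma> = UNIV" by (simp add: \<sigma>_def)
  have f1: "fst \<in> \<mu>1 \<rightarrow>\<^sub>M (borel :: (real^'n) measure)"
    by (subst measurable_cong_sets[OF s1 refl]) (rule fst_borel)
  have f2: "fst \<in> \<mu>2 \<rightarrow>\<^sub>M (borel :: (real^'n) measure)"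
    by (subst measurable_cong_sets[OF s2 refl]) (rule fst_borel)
  define \<rho>1 where "\<rho>1 = distr \<mu>1 borel fst"
  define \<rho>2 where "\<rho>2 = distr \<mu>2 borel fst"
  have pr1: "prob_space \<rho>1" unfolding \<rho>1_def by (rule prob_space.prob_space_distr[OF p1 f1])
  have pr2: "prob_space \<rho>2" unfolding \<rho>2_def by (rule prob_space.prob_space_distr[OF p2 f2])
  have sr1: "sets \<rho>1 = sets borel" unfolding \<rho>1_def by simp
  have mr1: "measure \<rho>1 B = measure \<mu>1 (fst -` B)" if "B \<in> sets borel" for B
    unfolding \<rho>1_def using that sp1 by (subst measure_distr[OF f1]) auto
  have mr2: "measure \<rho>2 B = measure \<mu>2 (fst -` B)" if "B \<in> sets borel" for B
    unfolding \<rho>2_def using that sp2 by (subst measure_distr[OF f2]) auto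
  have fstB: "fst -` B \<in> sets (borel :: ((real^'n) \<times> (real^'m)) measure)" if "B \<in> sets borel" for B :: "(real^'n) set"
    using measurable_sets_borel[OF fst_borel that] by simp
  have Wfst: "measure (W K c) (fst -` B) = measure \<sigma> B" if "B \<in> sets borel" for B
  proof -
    have "(\<lambda>y. (y,c)) -` fst -` B = B" by auto
    then show ?thesis unfolding Wd using that fstB[OF that] sps by (subst measure_distr[OF pc]) auto
  qed
  have decB: "measure \<sigma> B = t * measure \<rho>1 B + (1-t) * measure \<rho>2 B" if "B \<in> sets borel" for B
    using dec fstB[OF that] Wfst[OF that] mr1[OF that] mr2[OF that] by simp
  have bnd1: "measure \<rho>1 B \<le> measure \<sigma> B / t" if "B \<in> sets borel" for B
  proof -
    have "0 \<le> (1-t) * measure \<rho>2 B" using t by simp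
    then have "t * measure \<rho>1 B \<le> measure \<sigma> B" using decB[OF that] by linarith
    then show ?thesis using t by (simp add: field_simps)
  qed
  have down: "u \<in> S" if "y \<in> S" "\<forall>i. a$i \<le> u$i \<and> u$i \<le> y$i" for y u
    using pou that unfolding POU_set_def S_def slice_def by blast
  have geS: "\<forall>i. a$i \<le> y$i" if "y \<in> S" for y
    using pou that unfolding POU_set_def S_def slice_def D0_def by blast
  have trans: "measure \<rho>1 (cube (p - v) \<delta>) = measure \<rho>1 (cube p \<delta>) \<and> measure \<sigma> (cube (p - v) \<delta>) = measure \<sigma> (cube p \<delta>)"
    if v: "\<forall>k. 0 \<le> v$k" and pv: "\<forall>k. a$k + v$k \<le> p$k" and CS: "cube p \<delta> \<subseteq> S" for p v \<delta>
  proof -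
    have CS': "cube (p - v) \<delta> \<subseteq> S"
    proof
      fix y assume y: "y \<in> cube (p - v) \<delta>"
      then have yv: "y + v \<in> S" using CS cube_shift by blast
      have "\<forall>i. a$i \<le> y$i \<and> y$i \<le> (y+v)$i"
      proof
        fix i
        have "p$i - v$i < y$i" using y unfolding cube_def by auto
        moreover have "a$i + v$i \<le> p$i" "0 \<le> v$i" using pv v by auto
        ultimately show "a$i \<le> y$i \<and> y$i \<le> (y+v)$i" by simp
      qed
      then show "y \<in> S" using down[OF yv] by blast
    qed
    have "measure \<sigma> (cube (p - v) \<delta>) = measure lborel (cube (p - v) \<delta>) / V"
      using msig CS' by (simp add: Int_absorb1)
    also have "measure lborel (cube (p - v) \<delta>) = measure lborel (cube p \<delta>)"
      unfolding measure_def lborel_cube_shift ..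
    also have "measure lborel (cube p \<delta>) / V = measure \<sigma> (cube p \<delta>)"
      using msig CS by (simp add: Int_absorb1)
    finally have se: "measure \<sigma> (cube (p - v) \<delta>) = measure \<sigma> (cube p \<delta>)" .
    have d1: "0 \<le> measure \<rho>1 (cube (p - v) \<delta>) - measure \<rho>1 (cube p \<delta>)"
      using C1[OF v pv] mr1 by simp
    have d2: "0 \<le> measure \<rho>2 (cube (p - v) \<delta>) - measure \<rho>2 (cube p \<delta>)"
      using C2[OF v pv] mr2 by simp
    have sum0: "t * (measure \<rho>1 (cube (p - v) \<delta>) - measure \<rho>1 (cube p \<delta>)) + (1-t) * (measure \<rho>2 (cube (p - v) \<delta>) - measure \<rho>2 (cube p \<delta>)) = 0"
      using decB[of "cube (p - v) \<delta>"] decB[of "cube p \<delta>"] se by (simp add: algebra_simps)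
    have "0 \<le> t * (measure \<rho>1 (cube (p - v) \<delta>) - measure \<rho>1 (cube p \<delta>))" using t d1 by simp
    moreover have "0 \<le> (1-t) * (measure \<rho>2 (cube (p - v) \<delta>) - measure \<rho>2 (cube p \<delta>))" using t d2 by simp
    ultimately have "t * (measure \<rho>1 (cube (p - v) \<delta>) - measure \<rho>1 (cube p \<delta>)) = 0" using sum0 by linarith
    then show ?thesis using t se by simp
  qed
  define \<delta> where "\<delta> k = (1/2::real)^k" for k :: nat
  have dpos: "0 < \<delta> k" for k unfolding \<delta>_def by simp
  have Qc: "Q a k j = cube (a + \<delta> k *\<^sub>R vecn j) (\<delta> k)" for k j unfolding Q_def \<delta>_def by simp
  have grid: "measure \<rho>1 (Q a k j) = measure \<rho>1 (cube a (\<delta> k)) \<and> measure \<sigma> (Q a k j) = measure \<sigma> (cube a (\<delta> k))"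
    if QS: "Q a k j \<subseteq> S" for k j
  proof -
    have v: "\<forall>i. 0 \<le> (\<delta> k *\<^sub>R vecn j)$i" using dpos[of k] by (simp add: vecn_def)
    have pv: "\<forall>i. a$i + (\<delta> k *\<^sub>R vecn j)$i \<le> (a + \<delta> k *\<^sub>R vecn j)$i" by simp
    have "cube (a + \<delta> k *\<^sub>R vecn j) (\<delta> k) \<subseteq> S" using QS Qc by simp
    from trans[OF v pv this] show ?thesis unfolding Qc by simp
  qed
  define r where "r k = measure \<rho>1 (cube a (\<delta> k)) / measure \<sigma> (cube a (\<delta> k))" for k
  have rpos: "0 \<le> r k" for k unfolding r_def by simp
  have fr1: "finite_measure \<rho>1" using pr1 by (rule prob_space.finite_measure)
  have fs: "finite_measure \<sigma>" using ps by (rule prob_space.finite_measure)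
  have Qeq: "emeasure \<rho>1 (Q a k j) = ennreal (r k) * emeasure \<sigma> (Q a k j)" if QS: "Q a k j \<subseteq> S" for k j
  proof -
    have m: "measure \<rho>1 (Q a k j) = r k * measure \<sigma> (Q a k j)"
    proof (cases "measure \<sigma> (cube a (\<delta> k)) = 0")
      case True
      have "measure \<rho>1 (Q a k j) \<le> measure \<sigma> (Q a k j) / t" by (rule bnd1) simp
      then have "measure \<rho>1 (Q a k j) = 0" using grid[OF QS] True by (simp add: measure_nonneg antisym)
      then show ?thesis using grid[OF QS] True by simp
    next
      case False
      then show ?thesis using grid[OF QS] unfolding r_def by simp
    qed
    show ?thesis
      using m rpos[of k] fr1 fs
      by (simp add: finite_measure.emeasure_eq_measure ennreal_mult)
  qed
  have Jeq: "measure \<rho>1 (J a k U) = r k * measure \<sigma> (J a k U)" if US: "U \<subseteq> S" for k U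
  proof -
    have "emeasure \<rho>1 (J a k U) = ennreal (r k) * emeasure \<sigma> (J a k U)"
      by (rule J_measure[OF sr1 ss]) (use Qeq US in blast)
    then show ?thesis using rpos[of k] by (simp add: measure_def enn2real_mult)
  qed
  define U0 where "U0 = \<Union>{box a y | y. y \<in> S \<and> (\<forall>i. a$i < y$i)}"
  have Sfin: "emeasure lborel S < \<infinity>" using Vfin S_def by simp
  have U0p1: "open U0" unfolding U0_def by (rule U0_props(1)[of S a, OF Sb Sfin down geS])
  have U0p2: "U0 \<subseteq> S" unfolding U0_def by (rule U0_props(2)[of S a, OF Sb Sfin down geS])
  have U0p3: "U0 \<subseteq> {y. \<forall>i. a$i < y$i}" unfolding U0_def by (rule U0_props(3)[of S a, OF Sb Sfin down geS])
  have U0p4: "emeasure lborel U0 = emeasure lborel S" unfolding U0_def by (rule U0_props(4)[of S a, OF Sb Sfin down geS])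
  note U0p = U0p1 U0p2 U0p3 U0p4
  have U0b: "U0 \<in> sets borel" using U0p(1) by simp
  have sU0: "measure \<sigma> U0 = 1"
  proof -
    have "measure lborel U0 = V" using U0p(4) eV V0 unfolding measure_def by simp
    then show ?thesis using msig[OF U0b] U0p(2) V0 by (simp add: Int_absorb1)
  qed
  have sU0c: "measure \<sigma> (UNIV - U0) = 0"
    using prob_space.prob_compl[OF ps, of U0] U0b sU0 ss sps by simp
  have rU0c: "measure \<rho>1 (UNIV - U0) = 0"
    using bnd1[of "UNIV - U0"] U0b sU0c by (simp add: antisym measure_nonneg)
  have sp_r1: "space \<rho>1 = UNIV" unfolding \<rho>1_def by simp
  have rU0: "measure \<rho>1 U0 = 1"
    using prob_space.prob_compl[OF pr1, of U0] U0b rU0c sr1 sp_r1 by simp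
  have nullr: "UNIV - U0 \<in> null_sets \<rho>1"
    using rU0c U0b sr1 fr1 by (simp add: null_sets_def finite_measure.emeasure_eq_measure)
  have nulls: "UNIV - U0 \<in> null_sets \<sigma>"
    using sU0c U0b ss fs by (simp add: null_sets_def finite_measure.emeasure_eq_measure)
  have L1: "(\<lambda>k. measure \<rho>1 (J a k U0)) \<longlonglongrightarrow> 1"
    using J_lim[OF fr1 sr1 U0p(1) U0p(3)] rU0 by simp
  have L2: "(\<lambda>k. measure \<sigma> (J a k U0)) \<longlonglongrightarrow> 1"
    using J_lim[OF fs ss U0p(1) U0p(3)] sU0 by simp
  have rlim: "r \<longlonglongrightarrow> 1"
  proof -
    have "(\<lambda>k. measure \<rho>1 (J a k U0) / measure \<sigma> (J a k U0)) \<longlonglongrightarrow> 1 / 1"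
      by (rule tendsto_divide[OF L1 L2]) simp
    moreover have "eventually (\<lambda>k. measure \<sigma> (J a k U0) > 0) sequentially"
      using L2 by (simp add: order_tendsto_iff)
    then have "eventually (\<lambda>k. measure \<rho>1 (J a k U0) / measure \<sigma> (J a k U0) = r k) sequentially"
      by (rule eventually_mono) (simp add: Jeq[OF U0p(2)])
    ultimately show ?thesis by (simp add: Lim_transform_eventually)
  qed
  have openeq: "measure \<rho>1 U = measure \<sigma> U" if U: "open U" "U \<subseteq> U0" for U
  proof -
    have U': "U \<subseteq> {y. \<forall>i. a$i < y$i}" using U(2) U0p(3) by blast
    have US: "U \<subseteq> S" using U(2) U0p(2) by blast
    have A: "(\<lambda>k. measure \<rho>1 (J a k U)) \<longlonglongrightarrow> measure \<rho>1 U" by (rule J_lim[OF fr1 sr1 U(1) U'])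
    have "(\<lambda>k. r k * measure \<sigma> (J a k U)) \<longlonglongrightarrow> 1 * measure \<sigma> U"
      by (rule tendsto_mult[OF rlim J_lim[OF fs ss U(1) U']])
    then have B: "(\<lambda>k. measure \<rho>1 (J a k U)) \<longlonglongrightarrow> measure \<sigma> U" using Jeq[OF US] by simp
    show ?thesis using LIMSEQ_unique[OF A B] .
  qed
  have openeq2: "emeasure \<rho>1 G = emeasure \<sigma> G" if G: "open G" for G
  proof -
    have Ob: "G \<in> sets borel" using G by simp
    have eqs: "G - (UNIV - U0) = G \<inter> U0" by auto
    have "emeasure \<rho>1 G = emeasure \<rho>1 (G \<inter> U0)"
      using emeasure_Diff_null_set[OF nullr, of G] Ob sr1 eqs by simp
    also have "\<dots> = ennreal (measure \<rho>1 (G \<inter> U0))" using fr1 by (simp add: finite_measure.emeasure_eq_measure)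
    also have "measure \<rho>1 (G \<inter> U0) = measure \<sigma> (G \<inter> U0)"
      using openeq[of "G \<inter> U0"] G U0p(1) by auto
    also have "ennreal (measure \<sigma> (G \<inter> U0)) = emeasure \<sigma> (G \<inter> U0)" using fs by (simp add: finite_measure.emeasure_eq_measure)
    also have "\<dots> = emeasure \<sigma> G"
      using emeasure_Diff_null_set[OF nulls, of G] Ob ss eqs by simp
    finally show ?thesis .
  qed
  have rho_eq: "\<rho>1 = \<sigma>"
  proof (rule measure_eqI_generator_eq[where \<Omega>=UNIV and E="Collect open" and A="\<lambda>_. UNIV"])
    show "Int_stable (Collect open)" unfolding Int_stable_def by auto
    show "Collect open \<subseteq> Pow UNIV" by auto
    show "\<And>X. X \<in> Collect open \<Longrightarrow> emeasure \<rho>1 X = emeasure \<sigma> X" using openeq2 by auto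
    show "sets \<rho>1 = sigma_sets UNIV (Collect open)" using sr1 sets_borel by simp
    show "sets \<sigma> = sigma_sets UNIV (Collect open)" using ss sets_borel by simp
    show "range (\<lambda>_. UNIV) \<subseteq> Collect open" by auto
    show "(\<Union>i::nat. UNIV) = UNIV" by simp
    show "\<And>i::nat. emeasure \<rho>1 UNIV \<noteq> \<infinity>" using fr1 by (simp add: finite_measure.emeasure_finite)
  qed
  define N0 where "N0 = {x::(real^'n)\<times>(real^'m). snd x \<noteq> c}"
  have N0b: "N0 \<in> sets borel"
  proof -
    have "closed {x::(real^'n)\<times>(real^'m). snd x = c}"
      by (rule closed_Collect_eq) (intro continuous_intros)+
    then have "open N0" unfolding N0_def by (simp add: closed_def Collect_neg_eq)
    then show ?thesis by simp
  qed
  have WN0: "measure (W K c) N0 = 0"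
  proof -
    have "(\<lambda>y. (y,c)) -` N0 \<inter> space \<sigma> = {}" unfolding N0_def by auto
    then show ?thesis unfolding Wd using N0b by (subst measure_distr[OF pc]) auto
  qed
  have muN0: "measure \<mu>1 N0 = 0"
  proof -
    have "measure (W K c) N0 = t * measure \<mu>1 N0 + (1-t) * measure \<mu>2 N0" using dec N0b by simp
    moreover have "0 \<le> t * measure \<mu>1 N0" "0 \<le> (1-t) * measure \<mu>2 N0" using t by auto
    ultimately have "t * measure \<mu>1 N0 = 0" using WN0 by linarith
    then show ?thesis using t by simp
  qed
  have nullN0: "N0 \<in> null_sets \<mu>1"
    using muN0 N0b s1 p1 by (simp add: null_sets_def finite_measure.emeasure_eq_measure prob_space.finite_measure)
  show ?thesis
  proof (rule measure_eqI)
    show "sets \<mu>1 = sets (W K c)" using s1 by simp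
    fix A assume A: "A \<in> sets \<mu>1"
    define Ac where "Ac = (\<lambda>y. (y,c)) -` A"
    have Acb: "Ac \<in> sets borel" unfolding Ac_def using measurable_sets_borel[OF pair_c_borel] A s1 by simp
    have e1: "A - N0 = fst -` Ac - N0" unfolding Ac_def N0_def by auto
    have "emeasure \<mu>1 A = emeasure \<mu>1 (A - N0)" using emeasure_Diff_null_set[OF nullN0 A] by simp
    also have "\<dots> = emeasure \<mu>1 (fst -` Ac - N0)" unfolding e1 ..
    also have "\<dots> = emeasure \<mu>1 (fst -` Ac)"
      using emeasure_Diff_null_set[OF nullN0] fstB[OF Acb] s1 by simp
    also have "\<dots> = emeasure \<rho>1 Ac" unfolding \<rho>1_def using Acb sp1 by (subst emeasure_distr[OF f1]) auto
    also have "\<dots> = emeasure \<sigma> Ac" using rho_eq by simp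
    also have "\<dots> = emeasure (W K c) A" unfolding Wd Ac_def using A s1 sps by (subst emeasure_distr[OF pc]) auto
    finally show "emeasure \<mu>1 A = emeasure (W K c) A" .
  qed
qed




lemma D0_borel: "D0 a b \<in> sets (borel :: ((real^'n) \<times> (real^'m::finite)) measure)"
proof -
  have eq: "D0 a b = (\<Inter>i. {x::(real^'n)\<times>(real^'m). a$i \<le> fst x $ i}) \<inter> (\<Inter>j. {x. b j \<le> ereal (snd x $ j)})"
    unfolding D0_def by auto
  have "closed (D0 a b)" unfolding eq
    by (intro closed_Int closed_INT ballI closed_Collect_le continuous_intros)
  then show ?thesis by simp
qed

theorem mainTheorem16:
  fixes a :: "real^'n" and b :: "'m::finite \<Rightarrow> ereal"
    and K :: "((real^'n) \<times> (real^'m)) set" and c :: "real^'m"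
  assumes "\<forall>j. b j \<noteq> \<infinity>"
    and "POU_set a b K"
    and "K \<subseteq> {(y,z). z = c}"
    and "\<forall>j. b j \<le> ereal (c$j)"
    and "0 < emeasure lborel (slice K c)"
    and "emeasure lborel (slice K c) < \<infinity>"
  shows "extreme_point_measures (POU_distributions a b) (W K c)"
proof -
  note pou = assms(2) and Kc = assms(3) and Vpos = assms(5) and Vfin = assms(6)
  have pW: "prob_space (W K c)" by (rule W_prob[OF Vpos Vfin])
  have Kb: "K \<in> sets borel" using pou unfolding POU_set_def by auto
  have Sb: "slice K c \<in> sets borel" by (rule slice_borel[OF Kb])
  have WD: "emeasure (W K c) (D0 a b) = 1"
  proof -
    have pc: "(\<lambda>y. (y,c)) \<in> uniform_measure lborel (slice K c) \<rightarrow>\<^sub>M (borel :: ((real^'n) \<times> (real^'m)) measure)"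
      by (subst measurable_cong_sets[OF sets_uniform_measure refl]) (simp add: pair_c_borel)
    have sub: "slice K c \<subseteq> (\<lambda>y. (y,c)) -` D0 a b"
      using pou unfolding POU_set_def slice_def by auto
    have "emeasure (W K c) (D0 a b) = emeasure (uniform_measure lborel (slice K c)) ((\<lambda>y. (y,c)) -` D0 a b)"
      unfolding W_def using D0_borel by (subst emeasure_distr[OF pc]) auto
    also have "\<dots> = emeasure lborel (slice K c \<inter> (\<lambda>y. (y,c)) -` D0 a b) / emeasure lborel (slice K c)"
      using Sb measurable_sets_borel[OF pair_c_borel D0_borel] by (subst emeasure_uniform_measure) auto
    also have "slice K c \<inter> (\<lambda>y. (y,c)) -` D0 a b = slice K c" using sub by auto
    also have "emeasure lborel (slice K c) / emeasure lborel (slice K c) = 1"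
      using Vpos Vfin by (intro ennreal_divide_self) auto
    finally show ?thesis .
  qed
  have Wdist: "W K c \<in> distributions_on (D0 a b)"
    unfolding distributions_on_def using pW WD by simp
  have Wuni: "W K c \<in> POU_uniforms a b"
    unfolding POU_uniforms_def using pou Kc Vpos Vfin by blast
  have Whull: "measure_convex_hull (POU_uniforms a b) (W K c)"
    unfolding measure_convex_hull_def
    by (intro exI[of _ "1::nat"] exI[of _ "\<lambda>_. 1::real"] exI[of _ "\<lambda>_. W K c"]) (use Wuni in auto)
  have Win: "W K c \<in> POU_distributions a b"
    unfolding POU_distributions_def weak_closure_def
    using Wdist Whull by (auto intro!: bexI[of _ "W K c"])
  have props: "prob_space \<mu> \<and> sets \<mu> = sets borel" if "\<mu> \<in> POU_distributions a b" for \<mu>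
    using that unfolding POU_distributions_def weak_closure_def distributions_on_def by auto
  have Cineq: "measure \<mu> (fst -` cube p \<delta>) \<le> measure \<mu> (fst -` cube (p - v) \<delta>)"
    if mu: "\<mu> \<in> POU_distributions a b" and v: "\<forall>k. 0 \<le> v$k" and pv: "\<forall>k. a$k + v$k \<le> p$k" for \<mu> v p \<delta>
  proof (rule cube_ineq[OF _ _ _ pv])
    show "finite_measure \<mu>" using props[OF mu] prob_space.finite_measure by blast
    show "sets \<mu> = sets borel" using props[OF mu] by blast
    show "\<And>g. continuous_on UNIV g \<Longrightarrow> bounded (range g) \<Longrightarrow> vanish a v g \<Longrightarrow> (\<integral>x. g (fst x) \<partial>\<mu>) \<le> (\<integral>x. g (fst x + v) \<partial>\<mu>)"
      using POU_TI[OF mu _ _ _ v] by blast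
  qed
  show ?thesis
    unfolding extreme_point_measures_def
  proof (intro conjI Win ballI allI impI)
    fix \<mu>1 \<mu>2 t
    assume m1: "\<mu>1 \<in> POU_distributions a b" and m2: "\<mu>2 \<in> POU_distributions a b"
      and h: "0 < t \<and> t < 1 \<and> (\<forall>A\<in>sets (W K c). measure (W K c) A = t * measure \<mu>1 A + (1 - t) * measure \<mu>2 A)"
    have t: "0 < t" "t < 1" using h by auto
    have dec: "\<forall>A\<in>sets (W K c). measure (W K c) A = t * measure \<mu>1 A + (1 - t) * measure \<mu>2 A" using h by auto
    have dec': "\<forall>A\<in>sets (W K c). measure (W K c) A = (1 - t) * measure \<mu>2 A + (1 - (1 - t)) * measure \<mu>1 A"
      using dec by simp
    show "\<mu>1 = W K c"
      by (rule component_eq[OF pou Kc Vpos Vfin _ _ _ _ t dec])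
         (use props[OF m1] props[OF m2] Cineq[OF m1] Cineq[OF m2] in auto)
    show "\<mu>2 = W K c"
      by (rule component_eq[OF pou Kc Vpos Vfin _ _ _ _ _ _ dec'])
         (use props[OF m1] props[OF m2] Cineq[OF m1] Cineq[OF m2] t in auto)
  qed
qed


end
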